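(* For an integer $k \geq 1$ let $X^{(k)}, X^{(k)}_1, X^{(k)}_2, \ldots$ be i.i.d.\ random variables with $\mathbb{P}\{X^{(k)} = 2^i\} = \frac{2^{-i}}{1-2^{-k}}$ for $i = 1, \ldots, k$, and let $S^{(k)}_n = X^{(k)}_1 + \cdots + X^{(k)}_n$. For $n \geq 1$ let $\gamma_n = n / 2^{\lceil \log_2 n\rceil} \in (1/2,1]$. For $x \geq 0$ put \[ h(x) = (2+x)\ln\left(1 + \frac{x}{2}\right) - x. \] Then for any $n \geq 1$, any integer $j \geq 1 - \lceil \log_2 n \rceil$ and any $x \geq 0$, \[ \mathbb{P}\left\{ S_n^{(\lceil \log_2 n\rceil + j)} - \mathbb{E} S_n^{(\lceil \log_2 n\rceil + j)} > n x \right\} \leq e^{-h(x)/\eta_{j,\gamma_n}}, \] where $\eta_{j,\gamma} = 2^j \gamma^{-1}$.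
   Context: $X^{(k)}$ has the conditional law of a St.~Petersburg variable $X$ (with $\mathbb{P}\{X=2^i\}=2^{-i}$, $i \in \mathbb{N}$) given $X \leq 2^k$. $\lceil \cdot \rceil$ denotes the upper integer part. *)

theory Defs
  imports "HOL-Probability.Probability"
begin

definition stp_h :: "real \<Rightarrow> real" where
  "stp_h x = (2 + x) * ln (1 + x / 2) - x"

definition stp_gamma :: "nat \<Rightarrow> real" where
  "stp_gamma n = real n / 2 powr (of_int \<lceil>log 2 (real n)\<rceil>)"

definition stp_eta :: "int \<Rightarrow> real \<Rightarrow> real" where
  "stp_eta j \<gamma> = 2 powr (of_int j) / \<gamma>"

end

theory Submission imports Defs begin

lemma geo_sum1: "(\<Sum>m=1..k. (1/2^m::real)) = 1 - 1/2^k"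
  by (induction k) (auto simp: field_simps)

lemma geo_sum2: "(\<Sum>m=1..k. (2^m::real)) = 2^(k+1) - 2"
  by (induction k) (auto simp: field_simps)

lemma exp_tail_mono:
  fixes t a :: real
  assumes "0 \<le> t" "t \<le> 1" "0 \<le> a"
  shows "exp (t*a) - 1 - t*a \<le> t^2 * (exp a - 1 - a)"
proof -
  have e: "exp y - 1 - y = (\<Sum>n. inverse (fact (n+2)) * y^(n+2))" for y :: real
    using exp_first_terms[of y 2] by (simp add: numeral_2_eq_2)
  have s: "summable (\<lambda>n. inverse (fact (n+2)) * y^(n+2))" for y :: real
    using summable_ignore_initial_segment[OF summable_exp[of y], of 2]
    by (simp add: field_simps)
  have "(\<Sum>n. inverse (fact (n+2)) * (t*a)^(n+2)) \<le> (\<Sum>n. t^2 * (inverse (fact (n+2)) * a^(n+2)))"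
  proof (rule suminf_le)
    fix n
    have "t^(n+2) \<le> t^2"
      using assms power_decreasing[of 2 "n+2" t] by simp
    hence "t^(n+2) * a^(n+2) \<le> t^2 * a^(n+2)"
      by (intro mult_right_mono) (use assms in auto)
    hence "(t*a)^(n+2) \<le> t^2 * a^(n+2)" by (simp only: power_mult_distrib)
    from mult_left_mono[OF this, of "inverse (fact (n+2))"]
    show "inverse (fact (n+2)) * (t*a)^(n+2) \<le> t^2 * (inverse (fact (n+2)) * a^(n+2))"
      by (simp add: mult_ac)
  qed (use s summable_mult[OF s, of "t^2"] in auto)
  also have "\<dots> = t^2 * (\<Sum>n. inverse (fact (n+2)) * a^(n+2))"
    by (rule suminf_mult[OF s])
  finally show ?thesis using e by simp
qed


lemma (in prob_space) disc_AE:
  fixes Y :: "'a \<Rightarrow> real"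
  assumes Y: "Y \<in> borel_measurable M"
    and law: "\<And>m. 1 \<le> m \<Longrightarrow> m \<le> k \<Longrightarrow> prob {\<omega>\<in>space M. Y \<omega> = 2^m} = p m"
    and ps: "(\<Sum>m=1..k. p m) = 1"
  shows "AE \<omega> in M. \<exists>m\<in>{1..k}. Y \<omega> = 2^m"
proof -
  define A where "A m = {\<omega>\<in>space M. Y \<omega> = 2^m}" for m :: nat
  have sets: "A ` {1..k} \<subseteq> events" unfolding A_def using Y by auto
  have disj: "disjoint_family_on A {1..k}"
    unfolding disjoint_family_on_def A_def by auto
  have "prob (\<Union>m\<in>{1..k}. A m) = (\<Sum>m=1..k. prob (A m))"
    by (rule finite_measure_finite_Union[OF _ sets disj]) auto
  also have "\<dots> = 1" using law ps by (simp add: A_def)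
  finally have "AE \<omega> in M. \<omega> \<in> (\<Union>m\<in>{1..k}. A m)" by (rule AE_prob_1)
  thus ?thesis by eventually_elim (auto simp: A_def)
qed

lemma (in prob_space) disc_integral:
  fixes Y :: "'a \<Rightarrow> real"
  assumes Y: "Y \<in> borel_measurable M"
    and law: "\<And>m. 1 \<le> m \<Longrightarrow> m \<le> k \<Longrightarrow> prob {\<omega>\<in>space M. Y \<omega> = 2^m} = p m"
    and ps: "(\<Sum>m=1..k. p m) = 1"
    and f: "f \<in> borel_measurable borel"
  shows "integrable M (\<lambda>\<omega>. f (Y \<omega>))"
    and "expectation (\<lambda>\<omega>. f (Y \<omega>)) = (\<Sum>m=1..k. f (2^m) * p m)"
proof -
  define A where "A m = {\<omega>\<in>space M. Y \<omega> = 2^m}" for m :: nat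
  have sets: "A m \<in> events" for m unfolding A_def using Y by auto
  define g where "g \<omega> = (\<Sum>m=1..k. f (2^m) * indicator (A m) \<omega>)" for \<omega>
  have AEd: "AE \<omega> in M. \<exists>m\<in>{1..k}. Y \<omega> = 2^m"
    by (rule disc_AE[of Y k p]) (use Y law ps in auto)
  from AEd AE_space have AE: "AE \<omega> in M. f (Y \<omega>) = g \<omega>"
  proof eventually_elim
    case (elim \<omega>)
    then obtain m0 where m0: "m0 \<in> {1..k}" "Y \<omega> = 2^m0" by blast
    note elim = elim(2)
    have "g \<omega> = (\<Sum>m=1..k. if m = m0 then f (2^m) else 0)"
      unfolding g_def
    proof (intro sum.cong refl)
      fix m assume "m \<in> {1..k}"
      show "f (2^m) * indicator (A m) \<omega> = (if m = m0 then f (2^m) else 0)"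
        using m0 elim by (auto simp: A_def indicator_def)
    qed
    also have "\<dots> = f (2^m0)" using m0(1) by simp
    finally show ?case using m0 by simp
  qed
  have mf: "(\<lambda>\<omega>. f (Y \<omega>)) \<in> borel_measurable M" using f Y by measurable
  have ig: "integrable M g" unfolding g_def
    apply (rule Bochner_Integration.integrable_sum)
    apply (rule integrable_mult_right)
    apply (rule integrable_real_indicator)
    using sets by (auto simp: emeasure_eq_measure)
  have mg: "g \<in> borel_measurable M" using ig by auto
  show "integrable M (\<lambda>\<omega>. f (Y \<omega>))"
    using integrable_cong_AE[OF mf mg AE] ig by simp
  have "expectation (\<lambda>\<omega>. f (Y \<omega>)) = expectation g"
    by (rule integral_cong_AE[OF mf mg AE])
  also have "\<dots> = (\<Sum>m=1..k. f (2^m) * prob (A m))"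
    unfolding g_def
    by (subst Bochner_Integration.integral_sum) (auto intro!: integrable_real_indicator sets simp: emeasure_eq_measure sets)
  also have "\<dots> = (\<Sum>m=1..k. f (2^m) * p m)"
    using law by (simp add: A_def)
  finally show "expectation (\<lambda>\<omega>. f (Y \<omega>)) = (\<Sum>m=1..k. f (2^m) * p m)" .
qed


lemma mgf_bound:
  fixes l :: real and k :: nat
  assumes k: "k \<ge> 1" and l: "l \<ge> 0"
    and p: "\<And>m. p m = (1/2^m)/(1-1/2^k)"
    and mu: "\<mu> = (\<Sum>m=1..k. 2^m * p m)"
  shows "(\<Sum>m=1..k. exp (l*(2^m - \<mu>)) * p m) \<le> exp (2 * (exp (l*2^k) - 1 - l*2^k) / 2^k)"
proof -
  define D where "D = exp (l*2^k) - 1 - l*2^k"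
  have pk: "(2::real)^k \<ge> 2" using k
    by (metis power_increasing[of 1 k "2::real"] power_one_right one_le_numeral)
  have den: "1 - 1/2^k > (0::real)" using pk by (simp add: field_simps)
  have pnn: "p m \<ge> 0" for m using den by (simp add: p)
  have ps: "(\<Sum>m=1..k. p m) = 1"
  proof -
    have "(\<Sum>m=1..k. p m) = (\<Sum>m=1..k. 1/(2::real)^m) / (1 - 1/2^k)"
      unfolding p by (rule sum_divide_distrib[symmetric])
    also have "\<dots> = 1" using den by (simp only: geo_sum1) simp
    finally show ?thesis .
  qed
  have q: "(\<Sum>m=1..k. (2^m)^2 * p m) = 2 * (2::real)^k"
  proof -
    have "(\<Sum>m=1..k. (2^m)^2 * p m) = (\<Sum>m=1..k. 2^m) / (1 - 1/(2::real)^k)"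
      by (simp add: p sum_divide_distrib power2_eq_square)
    also have "\<dots> = (2^(k+1)-2) / (1 - 1/(2::real)^k)"
      by (simp only: geo_sum2)
    also have "\<dots> = 2 * 2^k"
      using pk by (simp add: field_simps)
    finally show ?thesis .
  qed
  have pw: "exp (l*2^m) \<le> 1 + l*2^m + ((2::real)^m/2^k)^2 * D" if m: "m \<in> {1..k}" for m
  proof -
    have t1: "(2::real)^m/2^k \<le> 1" using m by (simp add: power_increasing)
    have "exp ((2^m/2^k)*(l*2^k)) - 1 - (2^m/2^k)*(l*2^k) \<le> ((2::real)^m/2^k)^2 * (exp (l*2^k) - 1 - l*2^k)"
      by (rule exp_tail_mono) (use t1 l in auto)
    thus ?thesis by (simp add: D_def mult.commute)
  qed
  have "(\<Sum>m=1..k. exp (l*2^m) * p m) \<le> (\<Sum>m=1..k. (1 + l*2^m + ((2::real)^m/2^k)^2 * D) * p m)"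
    by (intro sum_mono mult_right_mono pw pnn)
  also have "\<dots> = (\<Sum>m=1..k. p m) + l * (\<Sum>m=1..k. 2^m * p m) + D / (2^k)^2 * (\<Sum>m=1..k. (2^m)^2 * p m)"
    by (simp add: sum.distrib sum_distrib_left ring_distribs power_divide mult_ac)
  also have "\<dots> = 1 + l*\<mu> + 2*D/2^k"
    by (simp only: ps q mu) (use pk in \<open>simp add: power2_eq_square\<close>)
  also have "\<dots> \<le> exp (l*\<mu> + 2*D/2^k)"
    using exp_ge_add_one_self[of "l*\<mu> + 2*D/2^k"] by (simp add: add.assoc)
  finally have main: "(\<Sum>m=1..k. exp (l*2^m) * p m) \<le> exp (l*\<mu> + 2*D/2^k)" .
  have "(\<Sum>m=1..k. exp (l*(2^m - \<mu>)) * p m) = exp (-l*\<mu>) * (\<Sum>m=1..k. exp (l*2^m) * p m)"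
    by (simp add: sum_distrib_left right_diff_distrib exp_diff exp_minus field_simps)
  also have "\<dots> \<le> exp (-l*\<mu>) * exp (l*\<mu> + 2*D/2^k)"
    by (intro mult_left_mono main) auto
  also have "\<dots> = exp (2*D/2^k)" by (simp flip: exp_add)
  finally show ?thesis by (simp add: D_def)
qed


theorem lemma1:
  fixes M :: "'a measure" and X :: "nat \<Rightarrow> 'a \<Rightarrow> real"
    and n :: nat and j :: int and x :: real and k :: nat
  assumes "prob_space M"
    and "n \<ge> 1"
    and "j \<ge> 1 - \<lceil>log 2 (real n)\<rceil>"
    and "x \<ge> 0"
    and k_def: "int k = \<lceil>log 2 (real n)\<rceil> + j"
    and rv: "\<And>i. X i \<in> borel_measurable M"
    and indep: "prob_space.indep_vars M (\<lambda>_. borel) X UNIV"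
    and law: "\<And>i m. 1 \<le> m \<Longrightarrow> m \<le> k \<Longrightarrow>
       measure M {\<omega> \<in> space M. X i \<omega> = 2 ^ m} = (1 / 2 ^ m) / (1 - 1 / 2 ^ k)"
  shows "measure M {\<omega> \<in> space M.
            (\<Sum>i=1..n. X i \<omega>) - prob_space.expectation M (\<lambda>\<omega>. \<Sum>i=1..n. X i \<omega>)
              > real n * x}
         \<le> exp (- stp_h x / stp_eta j (stp_gamma n))"
proof -
  interpret prob_space M by fact
  define c where "c = \<lceil>log 2 (real n)\<rceil>"
  have k1: "k \<ge> 1" using assms(3) k_def unfolding c_def by linarith
  define p where "p m = (1/2^m)/(1-1/(2::real)^k)" for m :: nat
  define \<mu> where "\<mu> = (\<Sum>m=1..k. 2^m * p m)"
  define I where "I = {1..n}"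
  have pk: "(2::real)^k \<ge> 2" using k1
    by (metis power_increasing[of 1 k "2::real"] power_one_right one_le_numeral)
  have den: "1 - 1/2^k > (0::real)" using pk by (simp add: field_simps)
  have ps: "(\<Sum>m=1..k. p m) = 1"
  proof -
    have "(\<Sum>m=1..k. p m) = (\<Sum>m=1..k. 1/(2::real)^m) / (1 - 1/2^k)"
      unfolding p_def by (rule sum_divide_distrib[symmetric])
    also have "\<dots> = 1" using den by (simp only: geo_sum1) simp
    finally show ?thesis .
  qed
  have lawp: "prob {\<omega>\<in>space M. X i \<omega> = 2^m} = p m" if "1 \<le> m" "m \<le> k" for i m
    using law[OF that] by (simp add: p_def)
  have intX: "integrable M (X i)" and EX: "expectation (X i) = \<mu>" for i
    using disc_integral[OF rv lawp ps, of "\<lambda>y. y"] by (auto simp: \<mu>_def)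
  have ES: "expectation (\<lambda>\<omega>. \<Sum>i=1..n. X i \<omega>) = real n * \<mu>"
    by (subst Bochner_Integration.integral_sum) (auto simp: intX EX)
  define h where "h = stp_h x"
  have p2: "(2::real) powr (of_int c) * 2 powr (of_int j) = 2^k"
  proof -
    have "(2::real) powr (of_int c) * 2 powr (of_int j) = 2 powr (of_int (c + j))"
      by (simp add: powr_add)
    also have "of_int (c + j) = real k" using k_def c_def by simp
    finally show ?thesis by (simp add: powr_realpow)
  qed
  have hval: "stp_h x / stp_eta j (stp_gamma n) = real n * h / 2^k"
  proof -
    have "stp_h x / stp_eta j (stp_gamma n) = h * real n / ((2::real) powr (of_int c) * 2 powr (of_int j))"
      unfolding stp_eta_def stp_gamma_def h_def c_def by (simp add: field_simps)
    thus ?thesis using p2 by simp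
  qed
  show ?thesis
  proof (cases "x = 0")
    case True
    hence "stp_h x = 0" by (simp add: stp_h_def)
    thus ?thesis by simp
  next
    case False
    with assms(4) have xp: "x > 0" by simp
    define L where "L = ln (1 + x/2)"
    define l where "l = L / 2^k"
    have Lp: "L > 0" using xp by (simp add: L_def)
    have lp: "l > 0" using Lp by (simp add: l_def)
    have lk: "l * 2^k = L" by (simp add: l_def)
    have eL: "exp L = 1 + x/2" using xp by (simp add: L_def)
    define C where "C = 2 * (exp (l*2^k) - 1 - l*2^k) / 2^k"
    define f where "f \<omega> = (\<Sum>i\<in>I. X i \<omega> - \<mu>)" for \<omega>
    have fm: "f \<in> borel_measurable M" unfolding f_def using rv by measurable
    have "{\<omega> \<in> space M. (\<Sum>i=1..n. X i \<omega>) - expectation (\<lambda>\<omega>. \<Sum>i=1..n. X i \<omega>) > real n * x}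
          \<subseteq> {\<omega>\<in>space M. f \<omega> \<ge> real n * x}"
      unfolding ES by (auto simp: f_def I_def sum_subtractf)
    hence "prob {\<omega> \<in> space M. (\<Sum>i=1..n. X i \<omega>) - expectation (\<lambda>\<omega>. \<Sum>i=1..n. X i \<omega>) > real n * x}
          \<le> prob {\<omega>\<in>space M. f \<omega> \<ge> real n * x}"
      by (intro finite_measure_mono) (use fm in measurable)
    moreover have "ennreal (prob {\<omega>\<in>space M. f \<omega> \<ge> real n * x}) \<le> ennreal (exp (- (real n * h / 2^k)))"
    proof -
      have "ennreal (prob {\<omega>\<in>space M. f \<omega> \<ge> real n * x}) = emeasure M {\<omega>\<in>space M. f \<omega> \<ge> real n * x}"
        by (simp add: emeasure_eq_measure)
      also have "\<dots> \<le> ennreal (exp (-l * (real n * x))) * (\<integral>\<^sup>+\<omega>. ennreal (exp (l * f \<omega>)) * indicator (space M) \<omega> \<partial>M)"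
        by (intro Chernoff_ineq_nn_integral_ge lp) (use fm in auto)
      also have "(\<integral>\<^sup>+\<omega>. ennreal (exp (l * f \<omega>)) * indicator (space M) \<omega> \<partial>M)
                = (\<integral>\<^sup>+\<omega>. (\<Prod>i\<in>I. ennreal (exp (l * (X i \<omega> - \<mu>)))) \<partial>M)"
        by (intro nn_integral_cong)
           (simp_all add: f_def sum_distrib_left exp_sum I_def prod_ennreal)
      also have "\<dots> = (\<Prod>i\<in>I. \<integral>\<^sup>+\<omega>. ennreal (exp (l * (X i \<omega> - \<mu>))) \<partial>M)"
        by (intro indep_vars_nn_integral indep_vars_compose2[OF indep_vars_subset[OF indep]])
           (auto simp: I_def)
      also have "\<dots> \<le> (\<Prod>i\<in>I. ennreal (exp C))"
      proof (intro prod_mono_ennreal)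
        fix i
        have ii: "integrable M (\<lambda>\<omega>. exp (l * (X i \<omega> - \<mu>)))"
          and ie: "expectation (\<lambda>\<omega>. exp (l * (X i \<omega> - \<mu>))) = (\<Sum>m=1..k. exp (l*(2^m - \<mu>)) * p m)"
          using disc_integral[OF rv lawp ps, of "\<lambda>y. exp (l * (y - \<mu>))"] by auto
        have "(\<integral>\<^sup>+\<omega>. ennreal (exp (l * (X i \<omega> - \<mu>))) \<partial>M) = ennreal (\<Sum>m=1..k. exp (l*(2^m - \<mu>)) * p m)"
          using nn_integral_eq_integral[OF ii] ie by simp
        also have "\<dots> \<le> ennreal (exp C)"
          unfolding C_def
          by (intro ennreal_leI mgf_bound[OF k1] p_def \<mu>_def) (use lp in auto)
        finally show "(\<integral>\<^sup>+\<omega>. ennreal (exp (l * (X i \<omega> - \<mu>))) \<partial>M) \<le> ennreal (exp C)" .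
      qed
      also have "\<dots> = ennreal (exp C ^ n)"
        by (simp add: I_def ennreal_power)
      finally have "ennreal (prob {\<omega>\<in>space M. f \<omega> \<ge> real n * x})
           \<le> ennreal (exp (-l * (real n * x))) * ennreal (exp C ^ n)"
        by (rule order_trans) (rule mult_left_mono, simp_all)
      also have "\<dots> = ennreal (exp (-l * (real n * x)) * exp C ^ n)"
        by (rule ennreal_mult[symmetric]) auto
      also have "exp (-l * (real n * x)) * exp C ^ n = exp (-l * (real n * x) + real n * C)"
        by (simp only: exp_add exp_of_nat_mult)
      also have "-l * (real n * x) + real n * C = - (real n * h / 2^k)"
      proof -
        have C2: "C = 2 * (x/2 - L) / 2^k" unfolding C_def lk eL by simp
        have h2: "h = (2 + x) * L - x" unfolding h_def stp_h_def L_def by simp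
        show ?thesis unfolding C2 h2 l_def by (simp add: field_simps)
      qed
      finally show ?thesis .
    qed
    hence "prob {\<omega>\<in>space M. f \<omega> \<ge> real n * x} \<le> exp (- (real n * h / 2^k))"
      by (subst (asm) ennreal_le_iff) auto
    ultimately show ?thesis using hval by simp
  qed
qed

end
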